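(* For any combinatorial auction as described in the context, there exist finitely many valid cuts such that, after adding them as artificial items, there is a price vector $p$ (on original and artificial items) for which $(x^*,p)$ is a price-match equilibrium of the augmented auction; that is, PME prices can always be generated via cuts.
   Context: Combinatorial auction: item types $j\in\mathcal J$ with supply $c_j\in\mathbb Z_{\ge1}$ (vector $c$); bidders $\mathcal I$; finite set of bids $\mathcal K$, bid $k$ made by bidder $i(k)$ with bundle $a^k\in\mathbb Z^J_{\ge0}$, $a^k\le c$, and amount $b_k\ge0$; $\mathcal K_i$ = bids of bidder $i$; bids taken truthful. $\bm A$ = matrix with columns $a^k$, $\bm B$ with $\bm B_{i,k}=1$ iff $k\in\mathcal K_i$. Feasible allocation: $x\in\{0,1\}^K$, $\bm Ax\le c$, $\bm Bx\le\bm 1$. $x^*$ is an efficient (optimal total bid amount) feasible allocation; $a^{i*},b_{i*}$ are bundle and amount of $i$'s accepted bid ($\bm 0,0$ if none). A Walrasian equilibrium (WE) is $(x^*,p)$ with $p\ge0$, $s_i=b_{i*}-p\,a^{i*}\ge0$, $p\,a^k+s_{i(k)}\ge b_k$ for all bids $k$, and $p_j=0$ whenever item $j$ is in excess supply under $x^*$. A WE is a price-match equilibrium (PME) if for every bidder $i$ there is a feasible allocation $x^{-i}$ with $x^{-i}_k=0$ for $k\in\mathcal K_i$, $p\,a^k\le b_k$ whenever $x^{-i}_k=1$, and $p\bm Ax^{-i}=p\bm Ax^*$. A valid cut is $(\alpha,\alpha_0)$, $\alpha\in\mathbb R^K_{\ge0}$, with $\alpha x\le\alpha_0$ for every feasible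 allocation $x$ and $\alpha x^*=\alpha_0$. Adding it as an artificial item means appending $\alpha$ as a new row of $\bm A$ with supply $\alpha_0$ (feasible allocations are unchanged); WE and PME in the augmented auction are defined with these extra items treated like original ones. *)

theory Defs
  imports Complex_Main
begin

text \<open>A (generalised) auction: item set J (items of type 'j), bidder set I,
  bid set K, owner map own (bid k is made by bidder own k), bundle matrix
  A j k (amount of item j in bid k), supply c j, bid amounts b k.
  Entries are real so that artificial items (cuts) fit the same framework.
  An allocation x in {0,1}^K is represented by the set S of accepted bids.\<close>

definition usage :: "('j \<Rightarrow> 'k \<Rightarrow> real) \<Rightarrow> 'k set \<Rightarrow> 'j \<Rightarrow> real" where
  "usage A S j = (\<Sum>k\<in>S. A j k)"

definition feasible ::
  "'j set \<Rightarrow> 'k set \<Rightarrow> ('k \<Rightarrow> 'i) \<Rightarrow> ('j \<Rightarrow> 'k \<Rightarrow> real) \<Rightarrow> ('j \<Rightarrow> real) \<Rightarrow> 'k set \<Rightarrow> bool" where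
  "feasible J K own A c S \<longleftrightarrow>
     S \<subseteq> K \<and> (\<forall>j\<in>J. usage A S j \<le> c j) \<and>
     (\<forall>k1\<in>S. \<forall>k2\<in>S. own k1 = own k2 \<longrightarrow> k1 = k2)"

definition efficient ::
  "'j set \<Rightarrow> 'k set \<Rightarrow> ('k \<Rightarrow> 'i) \<Rightarrow> ('j \<Rightarrow> 'k \<Rightarrow> real) \<Rightarrow> ('j \<Rightarrow> real) \<Rightarrow> ('k \<Rightarrow> real)
     \<Rightarrow> 'k set \<Rightarrow> bool" where
  "efficient J K own A c b S \<longleftrightarrow> feasible J K own A c S \<and>
     (\<forall>T. feasible J K own A c T \<longrightarrow> (\<Sum>k\<in>T. b k) \<le> (\<Sum>k\<in>S. b k))"

definition bundle_price :: "'j set \<Rightarrow> ('j \<Rightarrow> 'k \<Rightarrow> real) \<Rightarrow> ('j \<Rightarrow> real) \<Rightarrow> 'k \<Rightarrow> real" where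
  "bundle_price J A p k = (\<Sum>j\<in>J. p j * A j k)"

text \<open>Surplus s_i = b_{i*} - p a^{i*} of bidder i under allocation S; since
  a feasible S contains at most one bid of i, the sum over the bids of i in S
  is exactly the accepted bid's surplus (and 0 if none is accepted).\<close>
definition surplus ::
  "'j set \<Rightarrow> ('k \<Rightarrow> 'i) \<Rightarrow> ('j \<Rightarrow> 'k \<Rightarrow> real) \<Rightarrow> ('k \<Rightarrow> real) \<Rightarrow> 'k set \<Rightarrow> ('j \<Rightarrow> real) \<Rightarrow> 'i \<Rightarrow> real" where
  "surplus J own A b S p i = (\<Sum>k\<in>{k\<in>S. own k = i}. b k - bundle_price J A p k)"

definition walrasian_eq ::
  "'j set \<Rightarrow> 'i set \<Rightarrow> 'k set \<Rightarrow> ('k \<Rightarrow> 'i) \<Rightarrow> ('j \<Rightarrow> 'k \<Rightarrow> real) \<Rightarrow> ('j \<Rightarrow> real) \<Rightarrow> ('k \<Rightarrow> real)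
     \<Rightarrow> 'k set \<Rightarrow> ('j \<Rightarrow> real) \<Rightarrow> bool" where
  "walrasian_eq J I K own A c b S p \<longleftrightarrow>
     (\<forall>j\<in>J. 0 \<le> p j) \<and>
     (\<forall>i\<in>I. 0 \<le> surplus J own A b S p i) \<and>
     (\<forall>k\<in>K. b k \<le> bundle_price J A p k + surplus J own A b S p (own k)) \<and>
     (\<forall>j\<in>J. usage A S j < c j \<longrightarrow> p j = 0)"

definition price_match_eq ::
  "'j set \<Rightarrow> 'i set \<Rightarrow> 'k set \<Rightarrow> ('k \<Rightarrow> 'i) \<Rightarrow> ('j \<Rightarrow> 'k \<Rightarrow> real) \<Rightarrow> ('j \<Rightarrow> real) \<Rightarrow> ('k \<Rightarrow> real)
     \<Rightarrow> 'k set \<Rightarrow> ('j \<Rightarrow> real) \<Rightarrow> bool" where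
  "price_match_eq J I K own A c b S p \<longleftrightarrow>
     walrasian_eq J I K own A c b S p \<and>
     (\<forall>i\<in>I. \<exists>T. feasible J K own A c T \<and> (\<forall>k\<in>T. own k \<noteq> i) \<and>
        (\<forall>k\<in>T. bundle_price J A p k \<le> b k) \<and>
        (\<Sum>j\<in>J. p j * usage A T j) = (\<Sum>j\<in>J. p j * usage A S j))"

definition valid_cut ::
  "'j set \<Rightarrow> 'k set \<Rightarrow> ('k \<Rightarrow> 'i) \<Rightarrow> ('j \<Rightarrow> 'k \<Rightarrow> real) \<Rightarrow> ('j \<Rightarrow> real) \<Rightarrow> 'k set
     \<Rightarrow> ('k \<Rightarrow> real) \<Rightarrow> real \<Rightarrow> bool" where
  "valid_cut J K own A c S \<alpha> \<alpha>0 \<longleftrightarrow>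
     (\<forall>k\<in>K. 0 \<le> \<alpha> k) \<and>
     (\<forall>T. feasible J K own A c T \<longrightarrow> (\<Sum>k\<in>T. \<alpha> k) \<le> \<alpha>0) \<and>
     (\<Sum>k\<in>S. \<alpha> k) = \<alpha>0"

definition aug_items :: "'j set \<Rightarrow> (('k \<Rightarrow> real) \<times> real) list \<Rightarrow> ('j + nat) set" where
  "aug_items J cuts = Inl ` J \<union> Inr ` {..<length cuts}"

definition aug_matrix ::
  "('j \<Rightarrow> 'k \<Rightarrow> real) \<Rightarrow> (('k \<Rightarrow> real) \<times> real) list \<Rightarrow> ('j + nat) \<Rightarrow> 'k \<Rightarrow> real" where
  "aug_matrix A cuts x k = (case x of Inl j \<Rightarrow> A j k | Inr l \<Rightarrow> fst (cuts ! l) k)"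

definition aug_supply ::
  "('j \<Rightarrow> real) \<Rightarrow> (('k \<Rightarrow> real) \<times> real) list \<Rightarrow> ('j + nat) \<Rightarrow> real" where
  "aug_supply c cuts x = (case x of Inl j \<Rightarrow> c j | Inr l \<Rightarrow> snd (cuts ! l))"

end

theory Submission
  imports Defs
begin

lemma aug_items_single: "aug_items J [ct] = Inl ` J \<union> {Inr 0}"
  by (auto simp: aug_items_def)

lemma sum_aug_single:
  assumes "finite J"
  shows "(\<Sum>x\<in>aug_items J [ct]. f x) = (\<Sum>j\<in>J. f (Inl j)) + f (Inr 0)"
proof -
  have "(\<Sum>x\<in>aug_items J [ct]. f x) = (\<Sum>x\<in>Inl ` J. f x) + f (Inr 0)"
    unfolding aug_items_single using assms
    by (subst sum.union_disjoint) auto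
  also have "(\<Sum>x\<in>Inl ` J. f x) = (\<Sum>j\<in>J. f (Inl j))"
    by (subst sum.reindex) (auto simp: inj_on_def)
  finally show ?thesis .
qed

lemma feasible_subset:
  assumes "feasible J K own A c T" "T' \<subseteq> T" "finite K"
    and "\<forall>j k. 0 \<le> A j k"
  shows "feasible J K own A c T'"
proof -
  have fT: "finite T" using assms(1,3) unfolding feasible_def by (meson finite_subset)
  have "usage A T' j \<le> usage A T j" for j
    unfolding usage_def using fT assms(2,4) by (intro sum_mono2) auto
  then show ?thesis using assms(1,2) unfolding feasible_def by (meson order_trans subset_iff)
qed

lemma sum_split_filter:
  assumes "finite S"
  shows "sum f S = sum f {x\<in>S. P x} + sum f {x\<in>S. \<not> P x}"
proof -
  have "S = {x\<in>S. P x} \<union> {x\<in>S. \<not> P x}" by auto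
  then have "sum f S = sum f ({x\<in>S. P x} \<union> {x\<in>S. \<not> P x})" by simp
  also have "\<dots> = sum f {x\<in>S. P x} + sum f {x\<in>S. \<not> P x}"
    using assms by (intro sum.union_disjoint) auto
  finally show ?thesis .
qed

theorem corollary2:
  fixes J :: "'j set" and I :: "'i set" and K :: "'k set"
    and own :: "'k \<Rightarrow> 'i" and a :: "'k \<Rightarrow> 'j \<Rightarrow> nat" and c :: "'j \<Rightarrow> nat"
    and b :: "'k \<Rightarrow> real" and S :: "'k set"
  assumes "finite J" and "finite K"
    and "\<forall>k\<in>K. own k \<in> I"
    and "\<forall>j\<in>J. 1 \<le> c j"
    and "\<forall>k\<in>K. \<forall>j\<in>J. a k j \<le> c j"
    and "\<forall>k\<in>K. 0 \<le> b k"
    and "efficient J K own (\<lambda>j k. real (a k j)) (\<lambda>j. real (c j)) b S"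
  shows "\<exists>cuts :: (('k \<Rightarrow> real) \<times> real) list.
           (\<forall>(\<alpha>, \<alpha>0)\<in>set cuts.
              valid_cut J K own (\<lambda>j k. real (a k j)) (\<lambda>j. real (c j)) S \<alpha> \<alpha>0) \<and>
           (\<exists>p. price_match_eq (aug_items J cuts) I K own
                   (aug_matrix (\<lambda>j k. real (a k j)) cuts)
                   (aug_supply (\<lambda>j. real (c j)) cuts) b S p)"
proof -
  define A where "A = (\<lambda>j k. real (a k j))"
  define C where "C = (\<lambda>j. real (c j))"
  have Apos: "\<forall>j k. 0 \<le> A j k" unfolding A_def by simp
  have effS: "efficient J K own A C b S" using assms(7) unfolding A_def C_def .
  have feasS: "feasible J K own A C S" using effS unfolding efficient_def by simp
  have SK: "S \<subseteq> K" using feasS unfolding feasible_def by simp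
  have finS: "finite S" using SK assms(2) finite_subset by blast
  have uniqS: "\<And>k1 k2. k1 \<in> S \<Longrightarrow> k2 \<in> S \<Longrightarrow> own k1 = own k2 \<Longrightarrow> k1 = k2"
    using feasS unfolding feasible_def by blast
  have bpos: "\<And>k. k \<in> K \<Longrightarrow> 0 \<le> b k" using assms(6) by blast
  define F where "F = {T. feasible J K own A C T}"
  have finF: "finite F"
  proof -
    have "F \<subseteq> Pow K" unfolding F_def feasible_def by auto
    then show ?thesis using assms(2) finite_subset by blast
  qed
  have effT: "\<And>T. T \<in> F \<Longrightarrow> sum b T \<le> sum b S"
    using effS unfolding F_def efficient_def by blast
  have FK: "\<And>T. T \<in> F \<Longrightarrow> T \<subseteq> K" unfolding F_def feasible_def by blast
  have finT: "\<And>T. T \<in> F \<Longrightarrow> finite T" using FK assms(2) finite_subset by blast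
  have uniqT: "\<And>T k1 k2. T \<in> F \<Longrightarrow> k1 \<in> T \<Longrightarrow> k2 \<in> T \<Longrightarrow> own k1 = own k2 \<Longrightarrow> k1 = k2"
    unfolding F_def feasible_def by blast
  have subF: "\<And>T T'. T \<in> F \<Longrightarrow> T' \<subseteq> T \<Longrightarrow> T' \<in> F"
    unfolding F_def using feasible_subset[OF _ _ assms(2) Apos] by blast
  define G where "G t T = (\<Sum>k\<in>{k\<in>S. own k \<notin> own ` T}. t k)" for t :: "'k \<Rightarrow> real" and T
  define Cp where "Cp t \<longleftrightarrow> (\<forall>k\<in>S. 0 \<le> t k \<and> t k \<le> b k) \<and> (\<forall>T\<in>F. G t T \<le> sum b S - sum b T)"
    for t
  define blk where "blk t k \<longleftrightarrow> t k = b k \<or> (\<exists>T\<in>F. own k \<notin> own ` T \<and> G t T = sum b S - sum b T)"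
    for t k
  have main: "finite U \<Longrightarrow> U \<subseteq> S \<Longrightarrow> \<exists>t. Cp t \<and> (\<forall>k\<in>U. blk t k)" for U
  proof (induction U rule: finite_induct)
    case empty
    have "Cp (\<lambda>_. 0)" unfolding Cp_def G_def using SK bpos effT by auto
    then show ?case by blast
  next
    case (insert k U)
    then obtain t where Ct: "Cp t" and bl: "\<forall>k'\<in>U. blk t k'" by auto
    have kS: "k \<in> S" using insert by auto
    define D where "D = insert (b k - t k) ((\<lambda>T. sum b S - sum b T - G t T) ` {T\<in>F. own k \<notin> own ` T})"
    have finD: "finite D" unfolding D_def using finF by auto
    define \<delta> where "\<delta> = Min D"
    have \<delta>in: "\<delta> \<in> D" unfolding \<delta>_def using finD by (intro Min_in) (auto simp: D_def)
    have \<delta>le: "\<And>d. d \<in> D \<Longrightarrow> \<delta> \<le> d" unfolding \<delta>_def using finD by auto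
    have \<delta>nn: "0 \<le> \<delta>" using \<delta>in Ct kS unfolding D_def Cp_def by auto
    define t' where "t' = (\<lambda>x. t x + (if x = k then \<delta> else 0))"
    have Gt': "G t' T = G t T + (if own k \<notin> own ` T then \<delta> else 0)" for T
    proof -
      have "G t' T = G t T + (\<Sum>x\<in>{k\<in>S. own k \<notin> own ` T}. if x = k then \<delta> else 0)"
        unfolding G_def t'_def by (simp add: sum.distrib)
      also have "(\<Sum>x\<in>{k\<in>S. own k \<notin> own ` T}. if x = k then \<delta> else 0) =
          (if own k \<notin> own ` T then \<delta> else 0)"
        using finS kS by (simp add: sum.delta)
      finally show ?thesis .
    qed
    have Gmono: "G t T \<le> G t' T" for T using Gt' \<delta>nn by simp
    have Ct': "Cp t'"
      unfolding Cp_def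
    proof (intro conjI ballI)
      fix k' assume "k' \<in> S"
      then show "0 \<le> t' k'" using Ct \<delta>nn unfolding Cp_def t'_def by auto
      show "t' k' \<le> b k'"
      proof (cases "k' = k")
        case True
        have "\<delta> \<le> b k - t k" using \<delta>le unfolding D_def by auto
        then show ?thesis using True unfolding t'_def by simp
      next
        case False
        then show ?thesis using Ct \<open>k' \<in> S\<close> unfolding Cp_def t'_def by auto
      qed
    next
      fix T assume TF: "T \<in> F"
      show "G t' T \<le> sum b S - sum b T"
      proof (cases "own k \<notin> own ` T")
        case True
        have "\<delta> \<le> sum b S - sum b T - G t T" using \<delta>le TF True unfolding D_def by auto
        then show ?thesis using Gt'[of T] True by simp
      next
        case False
        then show ?thesis using Gt'[of T] Ct TF unfolding Cp_def by simp
      qed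
    qed
    have "\<forall>k'\<in>insert k U. blk t' k'"
    proof
      fix k' assume k'in: "k' \<in> insert k U"
      show "blk t' k'"
      proof (cases "k' = k")
        case True
        show ?thesis
        proof (cases "\<delta> = b k - t k")
          case True
          then show ?thesis using \<open>k' = k\<close> unfolding blk_def t'_def by simp
        next
          case False
          then obtain T where TF: "T \<in> F" "own k \<notin> own ` T" and
            dT: "\<delta> = sum b S - sum b T - G t T"
            using \<delta>in unfolding D_def by auto
          then have "G t' T = sum b S - sum b T" using Gt'[of T] by simp
          then show ?thesis using TF \<open>k' = k\<close> unfolding blk_def by blast
        qed
      next
        case False
        then have k'U: "k' \<in> U" using k'in by simp
        have tk': "t' k' = t k'" using False unfolding t'_def by simp
        show ?thesis
        proof (cases "t k' = b k'")
          case True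
          then show ?thesis using tk' unfolding blk_def by simp
        next
          case False
          then obtain T where TF: "T \<in> F" "own k' \<notin> own ` T" "G t T = sum b S - sum b T"
            using bl k'U unfolding blk_def by blast
          have "G t' T \<le> sum b S - sum b T" using Ct' TF unfolding Cp_def by blast
          then have "G t' T = sum b S - sum b T" using Gmono[of T] TF by simp
          then show ?thesis using TF unfolding blk_def by blast
        qed
      qed
    qed
    then show ?case using Ct' by blast
  qed
  obtain t where Ct: "Cp t" and blS: "\<forall>k\<in>S. blk t k" using main[OF finS] by blast
  define s where "s i = (\<Sum>k\<in>{k\<in>S. own k = i}. t k)" for i
  define \<pi> where "\<pi> k = max 0 (b k - s (own k))" for k
  have sS: "s (own k) = t k" if "k \<in> S" for k
  proof -
    have "{k'\<in>S. own k' = own k} = {k}" using that uniqS by auto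
    then show ?thesis unfolding s_def by simp
  qed
  have piS: "\<pi> k = b k - t k" if "k \<in> S" for k
    using sS[OF that] Ct that unfolding \<pi>_def Cp_def by auto
  have snn: "0 \<le> s i" for i unfolding s_def using Ct unfolding Cp_def by (intro sum_nonneg) auto
  have pinn: "0 \<le> \<pi> k" for k unfolding \<pi>_def by simp
  have pib: "\<pi> k \<le> b k" if "k \<in> K" for k
    using bpos[OF that] snn[of "own k"] unfolding \<pi>_def by simp
  have sumpiS: "sum \<pi> S = sum b S - sum t S"
    using piS by (simp add: sum_subtractf)
  have ident: "(\<Sum>k\<in>T. s (own k)) = sum t S - G t T" if TF: "T \<in> F" for T
  proof -
    have inj: "inj_on own T" using uniqT[OF TF] unfolding inj_on_def by blast
    have "(\<Sum>k\<in>T. s (own k)) = (\<Sum>i\<in>own ` T. s i)"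
      using inj by (simp add: sum.reindex)
    also have "\<dots> = (\<Sum>i\<in>own ` T. (\<Sum>k\<in>{x. x \<in> {k'\<in>S. own k' \<in> own ` T} \<and> own x = i}. t k))"
      unfolding s_def by (intro sum.cong) auto
    also have "\<dots> = (\<Sum>k\<in>{k'\<in>S. own k' \<in> own ` T}. t k)"
      using finS finT[OF TF] by (intro sum.group) auto
    also have "\<dots> = sum t S - G t T"
      using sum_split_filter[OF finS, of t "\<lambda>k'. own k' \<in> own ` T"] unfolding G_def by simp
    finally show ?thesis .
  qed
  have valid: "sum \<pi> T \<le> sum \<pi> S" if TF: "T \<in> F" for T
  proof -
    define T' where "T' = {k\<in>T. 0 < b k - s (own k)}"
    have T'F: "T' \<in> F" using subF[OF TF] unfolding T'_def by auto
    have "sum \<pi> T = (\<Sum>k\<in>T. if 0 < b k - s (own k) then b k - s (own k) else 0)"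
      unfolding \<pi>_def by (intro sum.cong) auto
    also have "\<dots> = (\<Sum>k\<in>T'. b k - s (own k))"
      unfolding T'_def using finT[OF TF] by (simp add: sum.inter_filter)
    also have "\<dots> = sum b T' - (sum t S - G t T')"
      using ident[OF T'F] by (simp add: sum_subtractf)
    also have "\<dots> \<le> sum b S - sum t S"
    proof -
      have "G t T' \<le> sum b S - sum b T'" using Ct T'F unfolding Cp_def by blast
      then show ?thesis by linarith
    qed
    finally show ?thesis using sumpiS by simp
  qed
  have tight: "sum \<pi> T = sum \<pi> S" if TF: "T \<in> F" and eq: "G t T = sum b S - sum b T" for T
  proof -
    have "sum \<pi> S = sum b T - (sum t S - G t T)" using sumpiS eq by simp
    also have "\<dots> = (\<Sum>k\<in>T. b k - s (own k))" using ident[OF TF] by (simp add: sum_subtractf)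
    also have "\<dots> \<le> sum \<pi> T" unfolding \<pi>_def by (intro sum_mono) auto
    finally show ?thesis using valid[OF TF] by simp
  qed
  define cuts :: "(('k \<Rightarrow> real) \<times> real) list" where "cuts = [(\<pi>, sum \<pi> S)]"
  define p :: "'j + nat \<Rightarrow> real" where "p x = (case x of Inl j \<Rightarrow> 0 | Inr l \<Rightarrow> 1)" for x
  have vc: "valid_cut J K own A C S \<pi> (sum \<pi> S)"
    unfolding valid_cut_def using pinn valid unfolding F_def by auto
  have bp: "bundle_price (aug_items J cuts) (aug_matrix A cuts) p k = \<pi> k" for k
    unfolding bundle_price_def cuts_def
    by (subst sum_aug_single[OF assms(1)]) (simp add: p_def aug_matrix_def)
  have pu: "(\<Sum>x\<in>aug_items J cuts. p x * usage (aug_matrix A cuts) T x) = sum \<pi> T" for T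
    unfolding cuts_def
    by (subst sum_aug_single[OF assms(1)]) (simp add: p_def aug_matrix_def usage_def)
  have afeas: "feasible (aug_items J cuts) K own (aug_matrix A cuts) (aug_supply C cuts) T
      \<longleftrightarrow> T \<in> F" for T
  proof
    assume h: "feasible (aug_items J cuts) K own (aug_matrix A cuts) (aug_supply C cuts) T"
    have "\<forall>j\<in>J. usage A T j \<le> C j"
    proof
      fix j assume "j \<in> J"
      then have "Inl j \<in> aug_items J cuts" unfolding aug_items_def by auto
      then show "usage A T j \<le> C j" using h
        unfolding feasible_def usage_def aug_matrix_def aug_supply_def by fastforce
    qed
    then show "T \<in> F" using h unfolding F_def feasible_def by auto
  next
    assume TF: "T \<in> F"
    have "\<forall>x\<in>aug_items J cuts. usage (aug_matrix A cuts) T x \<le> aug_supply C cuts x"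
    proof
      fix x assume "x \<in> aug_items J cuts"
      then consider j where "x = Inl j" "j \<in> J" | "x = Inr 0"
        unfolding aug_items_def cuts_def by auto
      then show "usage (aug_matrix A cuts) T x \<le> aug_supply C cuts x"
      proof cases
        case 1
        then show ?thesis using TF unfolding F_def feasible_def usage_def aug_matrix_def
            aug_supply_def by auto
      next
        case 2
        then show ?thesis using valid[OF TF] unfolding usage_def aug_matrix_def
            aug_supply_def cuts_def by auto
      qed
    qed
    then show "feasible (aug_items J cuts) K own (aug_matrix A cuts) (aug_supply C cuts) T"
      using TF unfolding F_def feasible_def by auto
  qed
  have surp: "surplus (aug_items J cuts) own (aug_matrix A cuts) b S p i = s i" for i
    unfolding surplus_def bp s_def using piS by (intro sum.cong) auto
  have we: "walrasian_eq (aug_items J cuts) I K own (aug_matrix A cuts) (aug_supply C cuts) b S p"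
    unfolding walrasian_eq_def
  proof (intro conjI ballI impI)
    fix x show "0 \<le> p x" unfolding p_def by (cases x) auto
  next
    fix i show "0 \<le> surplus (aug_items J cuts) own (aug_matrix A cuts) b S p i"
      using surp snn by simp
  next
    fix k show "b k \<le> bundle_price (aug_items J cuts) (aug_matrix A cuts) p k +
        surplus (aug_items J cuts) own (aug_matrix A cuts) b S p (own k)"
      unfolding bp surp \<pi>_def by simp
  next
    fix x assume "x \<in> aug_items J cuts"
      and lt: "usage (aug_matrix A cuts) S x < aug_supply C cuts x"
    then consider j where "x = Inl j" | "x = Inr 0"
      unfolding aug_items_def cuts_def by auto
    then show "p x = 0"
    proof cases
      case 1 then show ?thesis unfolding p_def by simp
    next
      case 2
      then show ?thesis using lt unfolding usage_def aug_matrix_def aug_supply_def cuts_def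
        by simp
    qed
  qed
  have pm: "\<forall>i\<in>I. \<exists>T. feasible (aug_items J cuts) K own (aug_matrix A cuts) (aug_supply C cuts) T
      \<and> (\<forall>k\<in>T. own k \<noteq> i) \<and> (\<forall>k\<in>T. bundle_price (aug_items J cuts) (aug_matrix A cuts) p k \<le> b k)
      \<and> (\<Sum>x\<in>aug_items J cuts. p x * usage (aug_matrix A cuts) T x)
        = (\<Sum>x\<in>aug_items J cuts. p x * usage (aug_matrix A cuts) S x)"
  proof
    fix i assume "i \<in> I"
    have SF: "S \<in> F" using feasS unfolding F_def by simp
    have good: "\<exists>T. feasible (aug_items J cuts) K own (aug_matrix A cuts) (aug_supply C cuts) T
      \<and> (\<forall>k\<in>T. own k \<noteq> i) \<and> (\<forall>k\<in>T. bundle_price (aug_items J cuts) (aug_matrix A cuts) p k \<le> b k)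
      \<and> (\<Sum>x\<in>aug_items J cuts. p x * usage (aug_matrix A cuts) T x)
        = (\<Sum>x\<in>aug_items J cuts. p x * usage (aug_matrix A cuts) S x)"
      if "T \<in> F" "\<forall>k\<in>T. own k \<noteq> i" "sum \<pi> T = sum \<pi> S" for T
    proof (intro exI conjI)
      show "feasible (aug_items J cuts) K own (aug_matrix A cuts) (aug_supply C cuts) T"
        using afeas that(1) by blast
      show "\<forall>k\<in>T. own k \<noteq> i" using that(2) .
      show "\<forall>k\<in>T. bundle_price (aug_items J cuts) (aug_matrix A cuts) p k \<le> b k"
        unfolding bp using pib FK[OF that(1)] by blast
      show "(\<Sum>x\<in>aug_items J cuts. p x * usage (aug_matrix A cuts) T x)
        = (\<Sum>x\<in>aug_items J cuts. p x * usage (aug_matrix A cuts) S x)"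
        unfolding pu using that(3) .
    qed
    show "\<exists>T. feasible (aug_items J cuts) K own (aug_matrix A cuts) (aug_supply C cuts) T
      \<and> (\<forall>k\<in>T. own k \<noteq> i) \<and> (\<forall>k\<in>T. bundle_price (aug_items J cuts) (aug_matrix A cuts) p k \<le> b k)
      \<and> (\<Sum>x\<in>aug_items J cuts. p x * usage (aug_matrix A cuts) T x)
        = (\<Sum>x\<in>aug_items J cuts. p x * usage (aug_matrix A cuts) S x)"
    proof (cases "\<exists>k\<in>S. own k = i")
      case False
      then show ?thesis using good[OF SF] by blast
    next
      case True
      then obtain k where kS: "k \<in> S" "own k = i" by blast
      have "blk t k" using blS kS by blast
      then show ?thesis unfolding blk_def
      proof
        assume "t k = b k"
        then have pk: "\<pi> k = 0" using piS[OF kS(1)] by simp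
        have "S - {k} \<in> F" using subF[OF SF] by blast
        moreover have "\<forall>k'\<in>S - {k}. own k' \<noteq> i" using uniqS kS by blast
        moreover have "sum \<pi> (S - {k}) = sum \<pi> S"
          using finS kS pk by (simp add: sum_diff1)
        ultimately show ?thesis using good[of "S - {k}"] by blast
      next
        assume "\<exists>T\<in>F. own k \<notin> own ` T \<and> G t T = sum b S - sum b T"
        then obtain T where TF: "T \<in> F" "own k \<notin> own ` T" "G t T = sum b S - sum b T" by blast
        have "\<forall>k'\<in>T. own k' \<noteq> i" using TF(2) kS(2) by blast
        moreover have "sum \<pi> T = sum \<pi> S" using tight[OF TF(1) TF(3)] .
        ultimately show ?thesis using good[OF TF(1)] by blast
      qed
    qed
  qed
  have fin: "(\<forall>(\<alpha>, \<alpha>0)\<in>set cuts. valid_cut J K own A C S \<alpha> \<alpha>0) \<and>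
    price_match_eq (aug_items J cuts) I K own (aug_matrix A cuts) (aug_supply C cuts) b S p"
    using vc we pm unfolding price_match_eq_def by (simp add: cuts_def)
  show ?thesis
    using fin unfolding A_def C_def by blast
qed

end
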